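(* Let $r,n\in\mathbb{N}$ with $r\leq n$, and let $\mathbf{s}=(s_1,\ldots,s_r)$ and $\mathbf{t}=(t_1,\ldots,t_r)$ be $r$-tuples of positive integers such that $\mathbf{s}\geq\mathbf{t}$. Then $\overline{H}_n(s_1,\ldots,s_r)\leq\overline{H}_n(t_1,\ldots,t_r)$.
   Context: $\mathbb{N}$ is the set of positive integers. $\overline{H}_n(s_1,\ldots,s_r)=\sum_{0\leq k_1<\cdots<k_r\leq n-1}\prod_{j=1}^r (2k_j+1)^{-s_j}$. For $r$-tuples of positive integers, $\mathbf{s}\geq\mathbf{t}$ means: $s_1+\cdots+s_r\geq t_1+\cdots+t_r$, and there is some $0\leq l\leq r-1$ with $s_i\leq t_i$ for $1\leq i\leq l$ and $s_i\geq t_i$ for $l+1\leq i\leq r$. *)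

theory Defs
  imports "HOL-Analysis.Analysis"
begin

text \<open>Tuples (s_1,...,s_r) are represented as functions nat => nat, read on indices 1..r.
  Hbar n r s = sum over 0 <= k_1 < ... < k_r <= n-1 of prod_j (2 k_j + 1)^(-s_j).\<close>

definition Hbar :: "nat \<Rightarrow> nat \<Rightarrow> (nat \<Rightarrow> nat) \<Rightarrow> real" where
  "Hbar n r s = (\<Sum>k \<in> {k \<in> {1..r} \<rightarrow>\<^sub>E {0..<n}.
        \<forall>i\<in>{1..r}. \<forall>j\<in>{1..r}. i < j \<longrightarrow> k i < k j}.
      \<Prod>j=1..r. 1 / (2 * real (k j) + 1) ^ s j)"

definition tuple_ge :: "nat \<Rightarrow> (nat \<Rightarrow> nat) \<Rightarrow> (nat \<Rightarrow> nat) \<Rightarrow> bool" where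
  "tuple_ge r s t \<longleftrightarrow>
     (\<Sum>i=1..r. s i) \<ge> (\<Sum>i=1..r. t i) \<and>
     (\<exists>l. l \<le> r - 1 \<and> (\<forall>i\<in>{1..l}. s i \<le> t i) \<and> (\<forall>i\<in>{l+1..r}. s i \<ge> t i))"

end

theory Submission
  imports Defs
begin

lemma pw_aux:
  fixes y b :: real
  assumes "0 < y" "0 < b" "(y \<le> b \<and> s \<le> t) \<or> (b \<le> y \<and> t \<le> s)"
  shows "y ^ t * b ^ s \<le> y ^ s * b ^ t"
  using assms(3)
proof
  assume h: "y \<le> b \<and> s \<le> t"
  then obtain d where d: "t = s + d" using le_Suc_ex by blast
  have "y ^ d \<le> b ^ d" using h assms by (simp add: power_mono)
  then have "y^s * b^s * y ^ d \<le> y^s * b^s * b ^ d"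
    using assms by (simp add: mult_left_mono)
  then show ?thesis using d by (simp add: power_add algebra_simps)
next
  assume h: "b \<le> y \<and> t \<le> s"
  then obtain d where d: "s = t + d" using le_Suc_ex by blast
  have "b ^ d \<le> y ^ d" using h assms by (simp add: power_mono)
  then have "y^t * b^t * b ^ d \<le> y^t * b^t * y ^ d"
    using assms by (simp add: mult_left_mono)
  then show ?thesis using d by (simp add: power_add algebra_simps)
qed

lemma term_le:
  fixes r :: nat and s t k :: "nat \<Rightarrow> nat"
  assumes mono: "\<forall>i\<in>{1..r}. \<forall>j\<in>{1..r}. i < j \<longrightarrow> k i < k j"
    and sum: "(\<Sum>i=1..r. s i) \<ge> (\<Sum>i=1..r. t i)"
    and l: "l \<le> r - 1" "1 \<le> r" "\<forall>i\<in>{1..l}. s i \<le> t i" "\<forall>i\<in>{l+1..r}. s i \<ge> t i"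
  shows "(\<Prod>j=1..r. 1 / (2 * real (k j) + 1) ^ s j) \<le> (\<Prod>j=1..r. 1 / (2 * real (k j) + 1) ^ t j)"
proof -
  define y where "y j = 2 * real (k j) + 1" for j
  define b where "b = y (l+1)"
  have ypos: "\<And>j. 0 < y j" unfolding y_def by simp
  have b1: "1 \<le> b" unfolding b_def y_def by simp
  have each: "y j ^ t j * b ^ s j \<le> y j ^ s j * b ^ t j" if j: "j \<in> {1..r}" for j
  proof (rule pw_aux)
    show "0 < y j" by (rule ypos)
    show "0 < b" using b1 by simp
    show "(y j \<le> b \<and> s j \<le> t j) \<or> (b \<le> y j \<and> t j \<le> s j)"
    proof (cases "j \<le> l")
      case True
      have "k j < k (l+1)" using mono j True l by auto
      then have "y j \<le> b" unfolding b_def y_def by simp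
      then show ?thesis using l True j by auto
    next
      case False
      have "k (l+1) \<le> k j"
      proof (cases "j = l+1")
        case True then show ?thesis by simp
      next
        case False
        have "l + 1 \<in> {1..r}" using l by auto
        moreover have "l + 1 < j" using False \<open>\<not> j \<le> l\<close> by simp
        ultimately show ?thesis using mono j by (meson less_imp_le_nat)
      qed
      then have "b \<le> y j" unfolding b_def y_def by simp
      then show ?thesis using l False j by auto
    qed
  qed
  have P: "(\<Prod>j=1..r. y j ^ t j * b ^ s j) \<le> (\<Prod>j=1..r. y j ^ s j * b ^ t j)"
    by (rule prod_mono) (use each ypos b1 in \<open>auto intro: mult_nonneg_nonneg less_imp_le\<close>)
  then have P2: "(\<Prod>j=1..r. y j ^ t j) * b ^ (\<Sum>i=1..r. s i) \<le> (\<Prod>j=1..r. y j ^ s j) * b ^ (\<Sum>i=1..r. t i)"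
    by (simp add: prod.distrib power_sum)
  have "b ^ (\<Sum>i=1..r. t i) \<le> b ^ (\<Sum>i=1..r. s i)"
    using b1 sum by (simp add: power_increasing)
  moreover have "0 \<le> (\<Prod>j=1..r. y j ^ s j)" using ypos by (simp add: less_imp_le prod_nonneg)
  ultimately have "(\<Prod>j=1..r. y j ^ t j) * b ^ (\<Sum>i=1..r. s i) \<le> (\<Prod>j=1..r. y j ^ s j) * b ^ (\<Sum>i=1..r. s i)"
    using P2 by (meson mult_left_mono order_trans)
  then have Q: "(\<Prod>j=1..r. y j ^ t j) \<le> (\<Prod>j=1..r. y j ^ s j)"
    using b1 by simp
  have pt: "0 < (\<Prod>j=1..r. y j ^ t j)" using ypos by (simp add: prod_pos)
  have "(\<Prod>j=1..r. 1 / y j ^ s j) = 1 / (\<Prod>j=1..r. y j ^ s j)" by (simp add: prod_dividef)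
  moreover have "(\<Prod>j=1..r. 1 / y j ^ t j) = 1 / (\<Prod>j=1..r. y j ^ t j)" by (simp add: prod_dividef)
  ultimately have "(\<Prod>j=1..r. 1 / y j ^ s j) \<le> (\<Prod>j=1..r. 1 / y j ^ t j)"
    using Q pt by (simp add: frac_le)
  then show ?thesis unfolding y_def .
qed

theorem lemma2p2:
  fixes r n :: nat and s t :: "nat \<Rightarrow> nat"
  assumes "1 \<le> r" and "r \<le> n"
    and "\<forall>i\<in>{1..r}. s i \<ge> 1" and "\<forall>i\<in>{1..r}. t i \<ge> 1"
    and "tuple_ge r s t"
  shows "Hbar n r s \<le> Hbar n r t"
proof -
  obtain l where l: "l \<le> r - 1" "\<forall>i\<in>{1..l}. s i \<le> t i" "\<forall>i\<in>{l+1..r}. s i \<ge> t i"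
    and sm: "(\<Sum>i=1..r. s i) \<ge> (\<Sum>i=1..r. t i)"
    using assms(5) unfolding tuple_ge_def by blast
  show ?thesis unfolding Hbar_def
    by (rule sum_mono) (use term_le[OF _ sm l(1) assms(1) l(2) l(3)] in blast)
qed

end
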